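(* Let $A\in\mathbb{R}^{n\times m}$ have distinct columns with $a_1=0$, let $c\in\mathbb{R}^m$ and $f=\mathrm{Sig}(A,c)$. Then $$\sup\{\gamma\in\mathbb{R} : c-\gamma e_1\in C_{\mathrm{SAGE}}(A)\}=\inf\{c^\top v : v\in C_{\mathrm{SAGE}}(A)^\dagger,\ v_1=1\},$$ i.e. strong duality holds between the primal and dual formulations of $f_{\mathsf{SAGE}}$ (with the conventions $\sup\emptyset=-\infty$).
   Context: Let $A\in\mathbb{R}^{n\times m}$ have distinct columns $a_1,\dots,a_m$. For $c\in\mathbb{R}^m$, $\mathrm{Sig}(A,c)$ denotes the function $x\mapsto\sum_{i=1}^m c_i\exp(a_i^\top x)$ on $\mathbb{R}^n$. $C_{\mathrm{NNS}}(A)=\{c\in\mathbb{R}^m:\mathrm{Sig}(A,c)(x)\ge 0\ \forall x\in\mathbb{R}^n\}$. For $k\in[m]$, the $k$-th AGE cone is $C_{\mathrm{AGE}}(A,k)=\{c\in C_{\mathrm{NNS}}(A): c_i\ge 0\ \forall i\ne k\}$, and the SAGE cone is the Minkowski sum $C_{\mathrm{SAGE}}(A)=\sum_{k=1}^m C_{\mathrm{AGE}}(A,k)$. For a convex cone $K\subset\mathbb{R}^m$, $K^\dagger=\{y: y^\top x\ge 0\ \forall x\in K\}$. $e_1$ is the first standard basis vector. *)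

theory Defs
  imports "HOL-Analysis.Analysis"
begin

(* Convention: m columns indexed 0..m-1 (index 0 plays the role of the paper's index 1).
   Columns a i :: real^'n.  Vectors in R^m are functions nat => real vanishing outside {..<m}. *)

definition Rm :: "nat \<Rightarrow> (nat \<Rightarrow> real) set" where
  "Rm m = {c. \<forall>i\<ge>m. c i = 0}"

definition Sig :: "nat \<Rightarrow> (nat \<Rightarrow> real^'n) \<Rightarrow> (nat \<Rightarrow> real) \<Rightarrow> real^'n \<Rightarrow> real" where
  "Sig m a c x = (\<Sum>i<m. c i * exp (a i \<bullet> x))"

definition C_NNS :: "nat \<Rightarrow> (nat \<Rightarrow> real^'n) \<Rightarrow> (nat \<Rightarrow> real) set" where
  "C_NNS m a = {c \<in> Rm m. \<forall>x. Sig m a c x \<ge> 0}"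

definition C_AGE :: "nat \<Rightarrow> (nat \<Rightarrow> real^'n) \<Rightarrow> nat \<Rightarrow> (nat \<Rightarrow> real) set" where
  "C_AGE m a k = {c \<in> C_NNS m a. \<forall>i<m. i \<noteq> k \<longrightarrow> c i \<ge> 0}"

definition C_SAGE :: "nat \<Rightarrow> (nat \<Rightarrow> real^'n) \<Rightarrow> (nat \<Rightarrow> real) set" where
  "C_SAGE m a = {(\<lambda>i. \<Sum>k<m. cs k i) | cs. \<forall>k<m. cs k \<in> C_AGE m a k}"

definition dual_cone :: "nat \<Rightarrow> (nat \<Rightarrow> real) set \<Rightarrow> (nat \<Rightarrow> real) set" where
  "dual_cone m K = {y \<in> Rm m. \<forall>x\<in>K. (\<Sum>i<m. y i * x i) \<ge> 0}"

definition e1 :: "nat \<Rightarrow> real" where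
  "e1 = (\<lambda>i. if i = 0 then 1 else 0)"

end

theory Submission imports Defs begin

lemma cc1 [continuous_intros]: "continuous_on S (\<lambda>c::nat \<Rightarrow> 'b::topological_space. c i)"
  by (rule continuous_on_product_then_coordinatewise[OF continuous_on_id])
lemma cc2 [continuous_intros]: "continuous_on S (\<lambda>c::nat \<Rightarrow> nat \<Rightarrow> 'b::topological_space. c k i)"
  using continuous_on_product_then_coordinatewise[OF cc1[of S k], of i] by simp

lemma compact_Pi_UNIV:
  assumes "\<And>i. compact (S i)"
  shows "compact (Pi UNIV S :: ('a \<Rightarrow> 'b::topological_space) set)"
proof -
  have "Pi UNIV S = PiE UNIV S" by auto
  moreover have "compactin (product_topology (\<lambda>i. euclidean) UNIV) (PiE UNIV S)"
    using assms by (simp add: compactin_PiE compactin_euclidean_iff)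
  ultimately show ?thesis by (simp add: euclidean_product_topology compactin_euclidean_iff)
qed

lemma closed_C_AGE: "closed (C_AGE m a k)"
proof -
  have "C_AGE m a k = {c. (\<forall>i. c i * (if m \<le> i then 1 else 0) = 0) \<and> (\<forall>x. 0 \<le> Sig m a c x) \<and> (\<forall>i. 0 \<le> c i * (if i < m \<and> i \<noteq> k then 1 else 0))}"
    by (auto simp: C_AGE_def C_NNS_def Rm_def split: if_splits)
  also have "closed \<dots>"
    unfolding Sig_def
    by (intro closed_Collect_conj closed_Collect_all closed_Collect_le closed_Collect_eq continuous_intros)
  finally show ?thesis .
qed

lemma closed_Rm: "closed (Rm m)"
proof -
  have "Rm m = {c. (\<forall>i. c i * (if m \<le> i then 1 else 0) = 0)}"
    by (auto simp: Rm_def split: if_splits) 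
  also have "closed \<dots>"
    by (intro closed_Collect_conj closed_Collect_all closed_Collect_le closed_Collect_eq continuous_intros)
  finally show ?thesis .
qed


lemma AGE_zero:
  assumes inj: "inj_on a {..<m}" and km: "k < m" and cA: "c \<in> C_AGE m a k"
    and z: "\<And>x. Sig m a c x = 0"
  shows "\<forall>i<m. c i = 0"
proof -
  have nn: "\<And>j. j < m \<Longrightarrow> j \<noteq> k \<Longrightarrow> 0 \<le> c j" using cA by (auto simp: C_AGE_def)
  have off: "c i = 0" if im: "i < m" and ik: "i \<noteq> k" for i
  proof (rule ccontr)
    assume "c i \<noteq> 0"
    with nn[OF im ik] have ci: "c i > 0" by simp
    define d where "d = a i - a k"
    have "d \<noteq> 0" using inj im km ik by (auto simp: d_def inj_on_def)
    hence D: "d \<bullet> d > 0" by simp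
    define t where "t = (\<bar>c k\<bar> + 1) / (c i * (d \<bullet> d))"
    have tpos: "t > 0" using ci D by (simp add: t_def)
    define x where "x = t *\<^sub>R d"
    have ai: "a i \<bullet> x = a k \<bullet> x + t * (d \<bullet> d)"
      by (simp add: x_def d_def inner_diff_left inner_diff_right algebra_simps)
    have split: "Sig m a c x = c k * exp (a k \<bullet> x) + (\<Sum>j\<in>{..<m}-{k}. c j * exp (a j \<bullet> x))"
      unfolding Sig_def using km by (simp add: sum.remove[of "{..<m}" k])
    have "c i * exp (a i \<bullet> x) \<le> (\<Sum>j\<in>{..<m}-{k}. c j * exp (a j \<bullet> x))"
      by (rule member_le_sum[where f="\<lambda>j. c j * exp (a j \<bullet> x)"]) (use im ik nn in auto)
    hence "c i * exp (a i \<bullet> x) \<le> - c k * exp (a k \<bullet> x)" using split z[of x] by simp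
    also have "\<dots> \<le> \<bar>c k\<bar> * exp (a k \<bullet> x)" by (intro mult_right_mono) auto
    finally have "c i * exp (t * (d \<bullet> d)) * exp (a k \<bullet> x) \<le> \<bar>c k\<bar> * exp (a k \<bullet> x)"
      by (simp add: ai exp_add algebra_simps)
    hence 1: "c i * exp (t * (d \<bullet> d)) \<le> \<bar>c k\<bar>" by simp
    have "c i * (1 + t * (d \<bullet> d)) \<le> c i * exp (t * (d \<bullet> d))"
      using ci by (intro mult_left_mono exp_ge_add_one_self) auto
    moreover have "c i * (1 + t * (d \<bullet> d)) = c i + \<bar>c k\<bar> + 1"
      using ci D by (simp add: t_def field_simps)
    ultimately show False using 1 ci by linarith
  qed
  have "Sig m a c 0 = c k"
    unfolding Sig_def using km off by (simp add: sum.remove[of "{..<m}" k])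
  with z[of 0] have "c k = 0" by simp
  with off show ?thesis by blast
qed


definition SS :: "nat \<Rightarrow> (nat \<Rightarrow> nat \<Rightarrow> real) \<Rightarrow> nat \<Rightarrow> real" where
  "SS m cs = (\<lambda>i. \<Sum>k<m. cs k i)"
definition Tall :: "nat \<Rightarrow> (nat \<Rightarrow> real^'n) \<Rightarrow> (nat \<Rightarrow> nat \<Rightarrow> real) set" where
  "Tall m a = {cs. (\<forall>k<m. cs k \<in> C_AGE m a k) \<and> (\<forall>k. m \<le> k \<longrightarrow> cs k = (\<lambda>i. 0))}"
definition NN :: "nat \<Rightarrow> (nat \<Rightarrow> nat \<Rightarrow> real) \<Rightarrow> real" where
  "NN m cs = (\<Sum>k<m. \<Sum>i<m. \<bar>cs k i\<bar>)"
definition n1 :: "nat \<Rightarrow> (nat \<Rightarrow> real) \<Rightarrow> real" where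
  "n1 m x = (\<Sum>i<m. \<bar>x i\<bar>)"

lemma SAGE_Tall: "x \<in> C_SAGE m a \<longleftrightarrow> (\<exists>cs\<in>Tall m a. x = SS m cs)"
proof
  assume "x \<in> C_SAGE m a"
  then obtain cs where cs: "\<forall>k<m. cs k \<in> C_AGE m a k" and x: "x = (\<lambda>i. \<Sum>k<m. cs k i)"
    by (auto simp: C_SAGE_def)
  define cs' where "cs' = (\<lambda>k. if k < m then cs k else (\<lambda>i. 0))"
  have "cs' \<in> Tall m a" using cs by (auto simp: cs'_def Tall_def)
  moreover have "x = SS m cs'" by (simp add: x SS_def cs'_def)
  ultimately show "\<exists>cs\<in>Tall m a. x = SS m cs" by blast
next
  assume "\<exists>cs\<in>Tall m a. x = SS m cs"
  then show "x \<in> C_SAGE m a" by (auto simp: C_SAGE_def Tall_def SS_def)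
qed

lemma closed_Tall: "closed (Tall m a)"
proof -
  have "Tall m a = (\<Inter>k. (\<lambda>cs. cs k) -` (if k < m then C_AGE m a k else {\<lambda>i. 0}))"
  proof -
    have eq: "cs \<in> Tall m a \<longleftrightarrow> (\<forall>k. cs k \<in> (if k < m then C_AGE m a k else {\<lambda>i. 0}))" for cs
      unfolding Tall_def mem_Collect_eq
    proof (rule iffI)
      assume "(\<forall>k<m. cs k \<in> C_AGE m a k) \<and> (\<forall>k. m \<le> k \<longrightarrow> cs k = (\<lambda>i. 0))"
      thus "\<forall>k. cs k \<in> (if k < m then C_AGE m a k else {\<lambda>i. 0})" by (metis not_le singletonI)
    next
      assume h: "\<forall>k. cs k \<in> (if k < m then C_AGE m a k else {\<lambda>i. 0})"
      show "(\<forall>k<m. cs k \<in> C_AGE m a k) \<and> (\<forall>k. m \<le> k \<longrightarrow> cs k = (\<lambda>i. 0))" using h by (metis not_le singletonD)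
    qed
    show ?thesis by (rule set_eqI) (simp only: eq vimage_eq INT_iff, blast)
  qed
  also have "closed \<dots>"
    by (intro closed_INT ballI, rule closed_vimage) (simp_all add: closed_C_AGE)
  finally show ?thesis .
qed

lemma C_AGE_scale: "c \<in> C_AGE m a k \<Longrightarrow> r \<ge> 0 \<Longrightarrow> (\<lambda>i. r * c i) \<in> C_AGE m a k"
proof -
  assume c: "c \<in> C_AGE m a k" and r: "r \<ge> 0"
  have "Sig m a (\<lambda>i. r * c i) x = r * Sig m a c x" for x
    unfolding Sig_def by (simp add: sum_distrib_left mult.assoc)
  with c r show ?thesis by (auto simp: C_AGE_def C_NNS_def Rm_def)
qed

lemma Sig_SS: "Sig m a (SS m cs) x = (\<Sum>k<m. Sig m a (cs k) x)"
  unfolding Sig_def SS_def by (simp add: sum_distrib_right) (rule sum.swap)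

lemma Tall_pointed:
  assumes inj: "inj_on a {..<m}" and cs: "cs \<in> Tall m a" and z: "\<forall>i<m. SS m cs i = 0"
  shows "NN m cs = 0"
proof -
  have nn: "\<And>k x. k < m \<Longrightarrow> 0 \<le> Sig m a (cs k) x"
    using cs by (auto simp: Tall_def C_AGE_def C_NNS_def)
  have "\<And>k x. k < m \<Longrightarrow> Sig m a (cs k) x = 0"
  proof -
    fix k x assume k: "k < m"
    have "Sig m a (SS m cs) x = 0" using z by (simp add: Sig_def)
    hence "(\<Sum>k<m. Sig m a (cs k) x) = 0" by (simp add: Sig_SS)
    with nn show "Sig m a (cs k) x = 0" using k
      by (subst (asm) sum_nonneg_eq_0_iff) auto
  qed
  hence "\<And>k i. k < m \<Longrightarrow> i < m \<Longrightarrow> cs k i = 0"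
    using AGE_zero[OF inj] cs by (auto simp: Tall_def)
  thus ?thesis by (simp add: NN_def)
qed


lemma cont_NN: "continuous_on S (NN m)"
  unfolding NN_def by (intro continuous_intros)

lemma cont_n1SS: "continuous_on S (\<lambda>cs. n1 m (SS m cs))"
  unfolding n1_def SS_def by (intro continuous_intros)

lemma cont_SS: "continuous_on S (SS m)"
  unfolding SS_def by (intro continuous_intros)

lemma cont_n1: "continuous_on S (n1 m)"
  unfolding n1_def by (intro continuous_intros)

lemma entry_bound:
  assumes cs: "cs \<in> Tall m a" shows "\<bar>cs k i\<bar> \<le> NN m cs"
proof (cases "k < m \<and> i < m")
  case True
  have "\<bar>cs k i\<bar> \<le> (\<Sum>i<m. \<bar>cs k i\<bar>)"
    by (rule member_le_sum[where f="\<lambda>i. \<bar>cs k i\<bar>"]) (use True in auto)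
  also have "\<dots> \<le> NN m cs" unfolding NN_def
    by (rule member_le_sum[where f="\<lambda>k. \<Sum>i<m. \<bar>cs k i\<bar>"]) (use True in \<open>auto intro: sum_nonneg\<close>)
  finally show ?thesis .
next
  case False
  have "cs k i = 0"
  proof (cases "k < m")
    case True
    with False have "m \<le> i" by simp
    moreover from cs True have "cs k \<in> Rm m" by (auto simp: Tall_def C_AGE_def C_NNS_def)
    ultimately show ?thesis by (simp add: Rm_def)
  next
    case False
    with cs have "cs k = (\<lambda>i. 0)" by (simp add: Tall_def)
    thus ?thesis by simp
  qed
  moreover have "NN m cs \<ge> 0" unfolding NN_def by (intro sum_nonneg) auto
  ultimately show ?thesis by simp
qed

lemma compact_box: "compact (Pi UNIV (\<lambda>k. Pi UNIV (\<lambda>i. {-R..R::real})) :: (nat \<Rightarrow> nat \<Rightarrow> real) set)"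
  by (intro compact_Pi_UNIV compact_Icc)

lemma compact_Tall_R: "compact (Tall m a \<inter> {cs. NN m cs \<le> R})"
proof -
  have sub: "Tall m a \<inter> {cs. NN m cs \<le> R} \<subseteq> Pi UNIV (\<lambda>k. Pi UNIV (\<lambda>i. {-R..R}))"
  proof
    fix cs assume "cs \<in> Tall m a \<inter> {cs. NN m cs \<le> R}"
    hence "-R \<le> cs k i \<and> cs k i \<le> R" for k i using entry_bound[of cs m a k i] by (auto simp: abs_le_iff)
    thus "cs \<in> Pi UNIV (\<lambda>k. Pi UNIV (\<lambda>i. {-R..R}))" by (auto simp: abs_le_iff)
  qed
  have cl: "closed (Tall m a \<inter> {cs. NN m cs \<le> R})"
    by (intro closed_Int closed_Tall closed_Collect_le cont_NN continuous_on_const)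
  have "compact (Pi UNIV (\<lambda>k. Pi UNIV (\<lambda>i. {-R..R})) \<inter> (Tall m a \<inter> {cs. NN m cs \<le> R}))"
    by (rule compact_Int_closed[OF compact_box cl])
  moreover have "Pi UNIV (\<lambda>k. Pi UNIV (\<lambda>i. {-R..R})) \<inter> (Tall m a \<inter> {cs. NN m cs \<le> R}) = Tall m a \<inter> {cs. NN m cs \<le> R}"
    using sub by blast
  ultimately show ?thesis by simp
qed

lemma NN_nonneg: "NN m cs \<ge> 0" unfolding NN_def by (intro sum_nonneg) auto
lemma n1_nonneg: "n1 m x \<ge> 0" unfolding n1_def by (intro sum_nonneg) auto

lemma Tall_scale:
  assumes cs: "cs \<in> Tall m a" and r: "r \<ge> 0"
  shows "(\<lambda>k i. r * cs k i) \<in> Tall m a" "NN m (\<lambda>k i. r * cs k i) = r * NN m cs"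
    "n1 m (SS m (\<lambda>k i. r * cs k i)) = r * n1 m (SS m cs)"
proof -
  show "(\<lambda>k i. r * cs k i) \<in> Tall m a"
    using cs r by (auto simp: Tall_def intro: C_AGE_scale)
  show "NN m (\<lambda>k i. r * cs k i) = r * NN m cs"
    using r by (simp add: NN_def sum_distrib_left abs_mult)
  show "n1 m (SS m (\<lambda>k i. r * cs k i)) = r * n1 m (SS m cs)"
    using r by (simp add: n1_def SS_def sum_distrib_left[symmetric] abs_mult)
qed

lemma Tall_bound:
  assumes inj: "inj_on a {..<m}"
  shows "\<exists>\<delta>>0. \<forall>cs\<in>Tall m a. \<delta> * NN m cs \<le> n1 m (SS m cs)"
proof -
  define T1 where "T1 = Tall m a \<inter> {cs. NN m cs = 1}"
  have cT1: "compact T1"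
  proof -
    have "T1 = (Tall m a \<inter> {cs. NN m cs \<le> 1}) \<inter> {cs. NN m cs = 1}" by (auto simp: T1_def)
    also have "compact \<dots>"
      by (intro compact_Int_closed compact_Tall_R closed_Collect_eq cont_NN continuous_on_const)
    finally show ?thesis .
  qed
  have scale: "(\<lambda>k i. (1 / NN m cs) * cs k i) \<in> T1 \<and>
       n1 m (SS m (\<lambda>k i. (1 / NN m cs) * cs k i)) = n1 m (SS m cs) / NN m cs"
    if cs: "cs \<in> Tall m a" and pos: "NN m cs > 0" for cs
    using Tall_scale[OF cs, of "1 / NN m cs"] pos by (auto simp: T1_def)
  show ?thesis
  proof (cases "T1 = {}")
    case True
    have "NN m cs = 0" if "cs \<in> Tall m a" for cs
      using scale[OF that] True NN_nonneg[of m cs] by force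
    thus ?thesis using n1_nonneg by (intro exI[of _ 1]) auto
  next
    case False
    obtain x0 where x0: "x0 \<in> T1" and mn: "\<forall>y\<in>T1. n1 m (SS m x0) \<le> n1 m (SS m y)"
      using continuous_attains_inf[OF cT1 False cont_n1SS] by blast
    have "n1 m (SS m x0) \<noteq> 0"
    proof
      assume "n1 m (SS m x0) = 0"
      hence "\<forall>i<m. SS m x0 i = 0" unfolding n1_def by (subst (asm) sum_nonneg_eq_0_iff) auto
      hence "NN m x0 = 0" using Tall_pointed[OF inj] x0 by (auto simp: T1_def)
      thus False using x0 by (simp add: T1_def)
    qed
    hence dpos: "n1 m (SS m x0) > 0" using n1_nonneg[of m "SS m x0"] by linarith
    show ?thesis
    proof (intro exI[of _ "n1 m (SS m x0)"] conjI ballI dpos)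
      fix cs assume cs: "cs \<in> Tall m a"
      show "n1 m (SS m x0) * NN m cs \<le> n1 m (SS m cs)"
      proof (cases "NN m cs = 0")
        case True thus ?thesis using n1_nonneg by simp
      next
        case False
        hence pos: "NN m cs > 0" using NN_nonneg[of m cs] by linarith
        have "n1 m (SS m x0) \<le> n1 m (SS m cs) / NN m cs" using scale[OF cs pos] mn by auto
        thus ?thesis using pos by (simp add: field_simps)
      qed
    qed
  qed
qed


lemma closed_SAGE:
  assumes inj: "inj_on a {..<m}"
  shows "closed (C_SAGE m a)"
proof (unfold closed_sequential_limits, intro allI impI, elim conjE)
  fix y l assume yK: "\<forall>n. y n \<in> C_SAGE m a" and lim: "y \<longlonglongrightarrow> l"
  obtain \<delta> where dpos: "\<delta> > 0" and dB: "\<forall>cs\<in>Tall m a. \<delta> * NN m cs \<le> n1 m (SS m cs)"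
    using Tall_bound[OF inj] by blast
  from yK have "\<forall>n. \<exists>c. c \<in> Tall m a \<and> y n = SS m c" unfolding SAGE_Tall by blast
  then obtain cs where cs: "\<And>n. cs n \<in> Tall m a" "\<And>n. y n = SS m (cs n)" by metis
  have "(\<lambda>n. n1 m (y n)) \<longlonglongrightarrow> n1 m l"
    by (rule continuous_on_tendsto_compose[OF cont_n1[of UNIV] lim]) auto
  hence "Bseq (\<lambda>n. n1 m (y n))" by (intro convergent_imp_Bseq convergentI)
  then obtain B where B: "\<And>n. norm (n1 m (y n)) \<le> B" by (metis BseqE)
  have inR: "cs n \<in> Tall m a \<inter> {c. NN m c \<le> B / \<delta>}" for n
  proof -
    have "\<delta> * NN m (cs n) \<le> B" using dB cs(1)[of n] B[of n] cs(2)[of n] by force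
    thus ?thesis using cs(1)[of n] dpos by (simp add: pos_le_divide_eq mult.commute)
  qed
  obtain L r where L: "L \<in> Tall m a \<inter> {c. NN m c \<le> B / \<delta>}" and r: "strict_mono r"
    and lr: "(cs \<circ> r) \<longlonglongrightarrow> L"
    using seq_compactE[OF compact_imp_seq_compact[OF compact_Tall_R], of cs m a "B / \<delta>"] inR by blast
  have 1: "(\<lambda>n. SS m ((cs \<circ> r) n)) \<longlonglongrightarrow> SS m L"
    by (rule continuous_on_tendsto_compose[OF cont_SS[of UNIV] lr]) auto
  have 2: "(y \<circ> r) \<longlonglongrightarrow> l" by (rule LIMSEQ_subseq_LIMSEQ[OF lim r])
  have "(y \<circ> r) = (\<lambda>n. SS m ((cs \<circ> r) n))" using cs(2) by auto
  with 1 2 have "l = SS m L" using LIMSEQ_unique by metis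
  thus "l \<in> C_SAGE m a" using L unfolding SAGE_Tall by blast
qed


lemma quad_lemma:
  fixes A B :: real
  assumes h: "\<And>t. 0 < t \<Longrightarrow> t \<le> 1 \<Longrightarrow> 0 \<le> 2*t*A + t^2*B" and B: "B \<ge> 0"
  shows "A \<ge> 0"
proof (rule ccontr)
  assume "\<not> A \<ge> 0" hence A: "A < 0" by simp
  define t where "t = min 1 (-A/(B+1))"
  have tp: "0 < t" "t \<le> 1" using A B by (auto simp: t_def divide_neg_pos)
  have "t * B \<le> (-A/(B+1)) * B" using B by (intro mult_right_mono) (auto simp: t_def)
  also have "\<dots> \<le> -A" using A B by (simp add: field_simps)
  finally have tb: "t * B \<le> -A" .
  have "2*t*A + t^2*B = t * (2*A + t*B)" by (simp add: power2_eq_square algebra_simps)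
  also have "\<dots> < 0" using tp tb A by (intro mult_pos_neg) auto
  finally show False using h[OF tp] by simp
qed

lemma abs_le_sq: "\<bar>u::real\<bar> \<le> 1 + u^2"
proof (cases "\<bar>u\<bar> \<le> 1")
  case True thus ?thesis by (smt (verit) zero_le_power2)
next
  case False
  hence "\<bar>u\<bar> * 1 \<le> \<bar>u\<bar> * \<bar>u\<bar>" by (intro mult_left_mono) auto
  also have "\<bar>u\<bar> * \<bar>u\<bar> = u^2" by (simp add: power2_eq_square)
  finally show ?thesis by simp
qed

lemma separation:
  fixes K :: "(nat \<Rightarrow> real) set"
  assumes clK: "closed K" and KR: "K \<subseteq> Rm m" and K0: "(\<lambda>i. 0) \<in> K"
    and add: "\<And>x y. x \<in> K \<Longrightarrow> y \<in> K \<Longrightarrow> (\<lambda>i. x i + y i) \<in> K"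
    and scale: "\<And>x r. x \<in> K \<Longrightarrow> r \<ge> 0 \<Longrightarrow> (\<lambda>i. r * x i) \<in> K"
    and zR: "z \<in> Rm m" and zK: "z \<notin> K"
  shows "\<exists>v\<in>Rm m. (\<forall>x\<in>K. (\<Sum>i<m. v i * x i) \<ge> 0) \<and> (\<Sum>i<m. v i * z i) < 0"
proof -
  define f where "f = (\<lambda>x::nat\<Rightarrow>real. \<Sum>i<m. (x i - z i)^2)"
  have fc: "continuous_on S f" for S unfolding f_def by (intro continuous_intros)
  define F where "F = f (\<lambda>i. 0)"
  define L where "L = K \<inter> {x. f x \<le> F}"
  define R where "R = (\<Sum>i<m. \<bar>z i\<bar>) + 1 + F"
  have L0: "(\<lambda>i. 0) \<in> L" using K0 by (simp add: L_def F_def)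
  have clL: "closed L" unfolding L_def by (intro closed_Int clK closed_Collect_le fc continuous_on_const)
  have Fnn: "F \<ge> 0" unfolding F_def f_def by (intro sum_nonneg) auto
  have subL: "L \<subseteq> Pi UNIV (\<lambda>i. {-R..R})"
  proof
    fix x assume xL: "x \<in> L"
    have "\<bar>x i\<bar> \<le> R" for i
    proof (cases "i < m")
      case True
      have "(x i - z i)^2 \<le> f x" unfolding f_def
        by (rule member_le_sum[where f="\<lambda>i. (x i - z i)^2"]) (use True in auto)
      also have "\<dots> \<le> F" using xL by (simp add: L_def)
      finally have 1: "(x i - z i)^2 \<le> F" .
      have 2: "\<bar>z i\<bar> \<le> (\<Sum>i<m. \<bar>z i\<bar>)"
        by (rule member_le_sum[where f="\<lambda>i. \<bar>z i\<bar>"]) (use True in auto)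
      have "\<bar>x i\<bar> \<le> \<bar>z i\<bar> + \<bar>x i - z i\<bar>" by linarith
      also have "\<dots> \<le> \<bar>z i\<bar> + (1 + (x i - z i)^2)" using abs_le_sq by simp
      finally show ?thesis using 1 2 by (simp add: R_def)
    next
      case False
      hence "x i = 0" using xL KR by (auto simp: L_def Rm_def)
      moreover have "R \<ge> 0" unfolding R_def using Fnn by (simp add: sum_nonneg)
      ultimately show ?thesis by simp
    qed
    hence "-R \<le> x i \<and> x i \<le> R" for i by (metis abs_le_iff minus_le_iff)
    thus "x \<in> Pi UNIV (\<lambda>i. {-R..R})" by auto
  qed
  have cL: "compact L"
  proof -
    have "compact (Pi UNIV (\<lambda>i. {-R..R}) \<inter> L)"
      by (intro compact_Int_closed compact_Pi_UNIV compact_Icc clL)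
    moreover have "Pi UNIV (\<lambda>i. {-R..R}) \<inter> L = L" using subL by blast
    ultimately show ?thesis by simp
  qed
  obtain p where pL: "p \<in> L" and pmin: "\<forall>y\<in>L. f p \<le> f y"
    using continuous_attains_inf[OF cL _ fc] L0 by blast
  have pK: "p \<in> K" using pL by (simp add: L_def)
  have pmin': "f p \<le> f x" if "x \<in> K" for x
  proof (cases "f x \<le> F")
    case True thus ?thesis using pmin that by (auto simp: L_def)
  next
    case False thus ?thesis using pL by (auto simp: L_def)
  qed
  define v where "v = (\<lambda>i. p i - z i)"
  have pR: "p \<in> Rm m" using pK KR by auto
  have vR: "v \<in> Rm m" using pR zR by (simp add: Rm_def v_def)
  have dir: "(\<Sum>i<m. v i * y i) \<ge> 0" if hy: "\<And>t. 0 < t \<Longrightarrow> t \<le> 1 \<Longrightarrow> (\<lambda>i. p i + t * y i) \<in> K" for y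
  proof (rule quad_lemma[where B="\<Sum>i<m. (y i)^2"])
    fix t :: real assume t: "0 < t" "t \<le> 1"
    have "f (\<lambda>i. p i + t * y i) = f p + (2*t*(\<Sum>i<m. v i * y i) + t^2 * (\<Sum>i<m. (y i)^2))"
    proof -
      have tm: "\<And>i. (p i + t * y i - z i)^2 = (p i - z i)^2 + (2*t*((p i - z i) * y i) + t^2 * (y i)^2)"
        by (simp add: power2_eq_square algebra_simps)
      show ?thesis unfolding f_def v_def tm sum.distrib
        by (simp add: sum_distrib_left mult.assoc)
    qed
    moreover have "f p \<le> f (\<lambda>i. p i + t * y i)" using pmin' hy[OF t] by blast
    ultimately show "0 \<le> 2*t*(\<Sum>i<m. v i * y i) + t^2 * (\<Sum>i<m. (y i)^2)" by linarith
  qed (intro sum_nonneg, auto)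
  have vK: "(\<Sum>i<m. v i * x i) \<ge> 0" if "x \<in> K" for x
    by (rule dir) (use add scale pK that in auto)
  have "(\<Sum>i<m. v i * (- p i)) \<ge> 0"
  proof (rule dir)
    fix t :: real assume t: "0 < t" "t \<le> 1"
    have "(\<lambda>i. p i + t * - p i) = (\<lambda>i. (1 - t) * p i)" by (auto simp: algebra_simps)
    thus "(\<lambda>i. p i + t * - p i) \<in> K" using scale[OF pK, of "1 - t"] t by simp
  qed
  hence vp: "(\<Sum>i<m. v i * p i) = 0" using vK[OF pK] by (simp add: sum_negf)
  have "\<exists>i<m. v i \<noteq> 0"
  proof (rule ccontr)
    assume "\<not> (\<exists>i<m. v i \<noteq> 0)"
    hence "p = z" using pR zR by (auto simp: v_def Rm_def fun_eq_iff) (metis not_le)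
    thus False using pK zK by simp
  qed
  then obtain i where i: "i < m" "v i \<noteq> 0" by blast
  have "(\<Sum>i<m. v i * v i) > 0"
  proof -
    have "v i * v i \<le> (\<Sum>i<m. v i * v i)"
      by (rule member_le_sum[where f="\<lambda>i. v i * v i"]) (use i in auto)
    moreover have "v i * v i > 0" using i(2) by (simp add: zero_less_mult_iff) (meson linorder_neqE_linordered_idom)
    ultimately show ?thesis by linarith
  qed
  moreover have "(\<Sum>i<m. v i * z i) = (\<Sum>i<m. v i * p i) - (\<Sum>i<m. v i * v i)"
    by (simp add: v_def sum_subtractf[symmetric] algebra_simps)
  ultimately have "(\<Sum>i<m. v i * z i) < 0" using vp by linarith
  thus ?thesis using vR vK by blast
qed


lemma C_AGE_add: "c \<in> C_AGE m a k \<Longrightarrow> d \<in> C_AGE m a k \<Longrightarrow> (\<lambda>i. c i + d i) \<in> C_AGE m a k"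
proof -
  assume c: "c \<in> C_AGE m a k" and d: "d \<in> C_AGE m a k"
  have "Sig m a (\<lambda>i. c i + d i) x = Sig m a c x + Sig m a d x" for x
    unfolding Sig_def by (simp add: sum.distrib algebra_simps)
  with c d show ?thesis by (auto simp: C_AGE_def C_NNS_def Rm_def intro: add_nonneg_nonneg)
qed

lemma SAGE_Rm: "C_SAGE m a \<subseteq> Rm m"
proof
  fix x assume "x \<in> C_SAGE m a"
  then obtain cs where cs: "cs \<in> Tall m a" "x = SS m cs" unfolding SAGE_Tall by blast
  have "\<forall>k<m. cs k \<in> Rm m" using cs(1) by (simp add: Tall_def C_AGE_def C_NNS_def)
  thus "x \<in> Rm m" using cs(2) by (simp add: Rm_def SS_def)
qed

lemma SAGE_add: "x \<in> C_SAGE m a \<Longrightarrow> y \<in> C_SAGE m a \<Longrightarrow> (\<lambda>i. x i + y i) \<in> C_SAGE m a"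
proof -
  assume "x \<in> C_SAGE m a" "y \<in> C_SAGE m a"
  then obtain cs ds where cs: "cs \<in> Tall m a" "x = SS m cs" and ds: "ds \<in> Tall m a" "y = SS m ds"
    unfolding SAGE_Tall by blast
  have "(\<lambda>k i. cs k i + ds k i) \<in> Tall m a"
    using cs(1) ds(1) unfolding Tall_def by (simp add: C_AGE_add)
  moreover have "(\<lambda>i. x i + y i) = SS m (\<lambda>k i. cs k i + ds k i)"
    using cs(2) ds(2) by (simp add: SS_def sum.distrib)
  ultimately show ?thesis unfolding SAGE_Tall by blast
qed

lemma SAGE_scale: "x \<in> C_SAGE m a \<Longrightarrow> r \<ge> 0 \<Longrightarrow> (\<lambda>i. r * x i) \<in> C_SAGE m a"
proof -
  assume "x \<in> C_SAGE m a" and r: "r \<ge> 0"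
  then obtain cs where cs: "cs \<in> Tall m a" "x = SS m cs" unfolding SAGE_Tall by blast
  have "(\<lambda>k i. r * cs k i) \<in> Tall m a" by (rule Tall_scale(1)[OF cs(1) r])
  moreover have "(\<lambda>i. r * x i) = SS m (\<lambda>k i. r * cs k i)"
    using cs(2) by (simp add: SS_def sum_distrib_left)
  ultimately show ?thesis unfolding SAGE_Tall by blast
qed

lemma AGE_0: "(\<lambda>i. 0) \<in> C_AGE m a k" by (simp add: C_AGE_def C_NNS_def Rm_def Sig_def)

lemma SAGE_0: "(\<lambda>i. 0) \<in> C_SAGE m a"
proof -
  have "(\<lambda>k i. 0::real) \<in> Tall m a" by (simp add: Tall_def AGE_0)
  moreover have "(\<lambda>i. 0::real) = SS m (\<lambda>k i. 0::real)" by (simp add: SS_def)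
  ultimately show ?thesis unfolding SAGE_Tall by blast
qed

lemma e1_mult: "e1 i * g = (if i = 0 then g else 0)" by (simp add: e1_def)

lemma SAGE_e1: assumes "0 < m" shows "e1 \<in> C_SAGE m a"
proof -
  define cs where "cs = (\<lambda>k::nat. if k = 0 then e1 else (\<lambda>i. 0))"
  have "e1 \<in> C_AGE m a 0"
  proof -
    have "Sig m a e1 x = exp (a 0 \<bullet> x)" for x
      using assms by (simp add: Sig_def e1_mult sum.delta)
    thus ?thesis using assms by (auto simp: C_AGE_def C_NNS_def Rm_def e1_def)
  qed
  hence "cs \<in> Tall m a" using assms by (simp add: Tall_def cs_def AGE_0)
  moreover have "e1 = SS m cs"
  proof
    fix i
    have "SS m cs i = (\<Sum>k<m. if k = 0 then e1 i else 0)"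
      unfolding SS_def by (rule sum.cong) (auto simp: cs_def)
    thus "e1 i = SS m cs i" using assms by (simp add: sum.delta)
  qed
  ultimately show ?thesis unfolding SAGE_Tall by blast
qed

lemma e1_sum: "0 < m \<Longrightarrow> (\<Sum>i<m. v i * e1 i) = v 0"
  by (simp add: mult.commute[of "v _"] e1_mult sum.delta)

lemma ones_dual:
  assumes "0 < m"
  shows "(\<lambda>i. if i < m then 1 else 0) \<in> dual_cone m (C_SAGE m a)"
proof -
  have "0 \<le> (\<Sum>i<m. (if i < m then 1 else 0) * y i)" if y: "y \<in> C_SAGE m a" for y
  proof -
    obtain cs where cs: "cs \<in> Tall m a" "y = SS m cs" using y unfolding SAGE_Tall by blast
    have "(\<Sum>i<m. (if i < m then 1 else 0) * y i) = Sig m a y 0" by (simp add: Sig_def)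
    also have "\<dots> = (\<Sum>k<m. Sig m a (cs k) 0)" using cs by (simp add: Sig_SS)
    also have "\<dots> \<ge> 0" using cs by (intro sum_nonneg) (auto simp: Tall_def C_AGE_def C_NNS_def)
    finally show ?thesis .
  qed
  thus ?thesis by (auto simp: dual_cone_def Rm_def)
qed


theorem mainTheorem1:
  fixes m :: nat and a :: "nat \<Rightarrow> real^'n" and c :: "nat \<Rightarrow> real"
  assumes "0 < m"
    and "inj_on a {..<m}"
    and "a 0 = 0"
    and "c \<in> Rm m"
  shows "Sup {ereal \<gamma> | \<gamma>. (\<lambda>i. c i - \<gamma> * e1 i) \<in> C_SAGE m a}
       = Inf {ereal (\<Sum>i<m. c i * v i) | v. v \<in> dual_cone m (C_SAGE m a) \<and> v 0 = 1}"
    (is "Sup ?P = Inf ?D")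
proof -
  note m = assms(1) and inj = assms(2) and cR = assms(4)
  define K where "K = C_SAGE m a"
  have lin: "(\<Sum>i<m. v i * (c i - \<gamma> * e1 i)) = (\<Sum>i<m. c i * v i) - \<gamma> * v 0" for v \<gamma>
  proof -
    have "(\<Sum>i<m. v i * (c i - \<gamma> * e1 i)) = (\<Sum>i<m. c i * v i - \<gamma> * (v i * e1 i))"
      by (rule sum.cong) (simp_all add: algebra_simps)
    also have "\<dots> = (\<Sum>i<m. c i * v i) - \<gamma> * (\<Sum>i<m. v i * e1 i)"
      by (simp only: sum_subtractf sum_distrib_left)
    finally have "(\<Sum>i<m. v i * (c i - \<gamma> * e1 i)) = (\<Sum>i<m. c i * v i) - \<gamma> * (\<Sum>i<m. v i * e1 i)" .
    thus ?thesis using e1_sum[OF m] by simp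
  qed
  have weak: "\<gamma> \<le> (\<Sum>i<m. c i * v i)"
    if g: "(\<lambda>i. c i - \<gamma> * e1 i) \<in> K" and v: "v \<in> dual_cone m K" "v 0 = 1" for \<gamma> v
  proof -
    have "0 \<le> (\<Sum>i<m. v i * (c i - \<gamma> * e1 i))" using v(1) g by (auto simp: dual_cone_def)
    thus ?thesis using lin[of v \<gamma>] v(2) by simp
  qed
  have le1: "Sup ?P \<le> Inf ?D"
  proof (rule Sup_least, rule Inf_greatest)
    fix x y assume "x \<in> ?P" "y \<in> ?D"
    thus "x \<le> y" using weak unfolding K_def by auto
  qed
  have le2: "Inf ?D \<le> Sup ?P"
  proof (rule ccontr)
    assume "\<not> Inf ?D \<le> Sup ?P"
    hence "Sup ?P < Inf ?D" by simp
    then obtain \<gamma> where g1: "Sup ?P < ereal \<gamma>" and g2: "ereal \<gamma> < Inf ?D"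
      using ereal_dense2 by blast
    have Dlow: "\<gamma> < (\<Sum>i<m. c i * u i)" if "u \<in> dual_cone m K" "u 0 = 1" for u
    proof -
      have "Inf ?D \<le> ereal (\<Sum>i<m. c i * u i)" by (rule Inf_lower) (use that in \<open>auto simp: K_def\<close>)
      hence "ereal \<gamma> < ereal (\<Sum>i<m. c i * u i)" using g2 by (rule order.strict_trans2[rotated])
      thus ?thesis by simp
    qed
    define z where "z = (\<lambda>i. c i - \<gamma> * e1 i)"
    have zK: "z \<notin> K"
    proof
      assume "z \<in> K"
      hence "ereal \<gamma> \<in> ?P" by (auto simp: z_def K_def)
      hence "ereal \<gamma> \<le> Sup ?P" by (rule Sup_upper)
      thus False using g1 by simp
    qed
    have zR: "z \<in> Rm m" using cR m by (auto simp: z_def Rm_def e1_def)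
    have clK: "closed K" unfolding K_def by (rule closed_SAGE[OF inj])
    have KR: "K \<subseteq> Rm m" unfolding K_def by (rule SAGE_Rm)
    have K0: "(\<lambda>i. 0) \<in> K" unfolding K_def by (rule SAGE_0)
    have Kadd: "\<And>x y. x \<in> K \<Longrightarrow> y \<in> K \<Longrightarrow> (\<lambda>i. x i + y i) \<in> K"
      unfolding K_def by (rule SAGE_add)
    have Ksc: "\<And>x r. x \<in> K \<Longrightarrow> r \<ge> 0 \<Longrightarrow> (\<lambda>i. r * x i) \<in> K"
      unfolding K_def by (rule SAGE_scale)
    from separation[OF clK KR K0 Kadd Ksc zR zK]
    obtain v where vR: "v \<in> Rm m" and vK: "\<forall>x\<in>K. (\<Sum>i<m. v i * x i) \<ge> 0"
      and vz: "(\<Sum>i<m. v i * z i) < 0" by blast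
    have vD: "v \<in> dual_cone m K" using vR vK by (simp add: dual_cone_def)
    have "e1 \<in> K" unfolding K_def by (rule SAGE_e1[OF m])
    hence "0 \<le> (\<Sum>i<m. v i * e1 i)" using vK by blast
    hence v0: "v 0 \<ge> 0" using e1_sum[OF m, of v] by simp
    have vz': "(\<Sum>i<m. c i * v i) - \<gamma> * v 0 < 0" using vz lin[of v \<gamma>] by (simp add: z_def)
    show False
    proof (cases "v 0 = 0")
      case False
      hence vp: "v 0 > 0" using v0 by simp
      define u where "u = (\<lambda>i. v i / v 0)"
      have uD: "u \<in> dual_cone m K"
      proof -
        have eq: "(\<Sum>i<m. u i * x i) = (\<Sum>i<m. v i * x i) / v 0" for x
          by (simp add: u_def sum_divide_distrib)
        have "u \<in> Rm m" using vR by (simp add: Rm_def u_def)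
        moreover have "\<forall>x\<in>K. 0 \<le> (\<Sum>i<m. u i * x i)"
          using vK vp by (simp add: eq divide_nonneg_pos)
        ultimately show ?thesis by (simp add: dual_cone_def)
      qed
      have u0: "u 0 = 1" using vp by (simp add: u_def)
      have "(\<Sum>i<m. c i * u i) = (\<Sum>i<m. c i * v i) / v 0"
        by (simp add: u_def sum_divide_distrib)
      also have "\<dots> < \<gamma>" using vz' vp by (simp add: divide_less_eq)
      finally show False using Dlow[OF uD u0] by simp
    next
      case True
      hence V: "(\<Sum>i<m. c i * v i) < 0" using vz' by simp
      define w where "w = (\<lambda>i::nat. if i < m then 1 else (0::real))"
      have wD: "w \<in> dual_cone m K" using ones_dual[OF m] by (simp add: w_def K_def)
      define W where "W = (\<Sum>i<m. c i * w i)"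
      define V where "V = (\<Sum>i<m. c i * v i)"
      define t where "t = (\<bar>W\<bar> + \<bar>\<gamma>\<bar> + 1) / (- V)"
      have tpos: "t \<ge> 0" unfolding t_def by (rule divide_nonneg_pos) (use V in \<open>auto simp: V_def\<close>)
      define u where "u = (\<lambda>i. w i + t * v i)"
      have uD: "u \<in> dual_cone m K"
      proof -
        have eq: "(\<Sum>i<m. u i * x i) = (\<Sum>i<m. w i * x i) + t * (\<Sum>i<m. v i * x i)" for x
        proof -
          have "(\<Sum>i<m. u i * x i) = (\<Sum>i<m. w i * x i + t * (v i * x i))"
            by (rule sum.cong) (simp_all add: u_def algebra_simps)
          thus ?thesis by (simp only: sum.distrib sum_distrib_left)
        qed
        moreover have "u \<in> Rm m" using vR by (simp add: u_def w_def Rm_def)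
        moreover have "\<forall>x\<in>K. 0 \<le> (\<Sum>i<m. w i * x i)" using wD by (simp add: dual_cone_def)
        ultimately show ?thesis using vK tpos by (simp add: dual_cone_def)
      qed
      have u0: "u 0 = 1" using True m by (simp add: u_def w_def)
      have "(\<Sum>i<m. c i * u i) = (\<Sum>i<m. c i * w i + t * (c i * v i))"
        by (rule sum.cong) (simp_all add: u_def algebra_simps)
      also have "\<dots> = W + t * V" unfolding W_def V_def by (simp only: sum.distrib sum_distrib_left)
      also have "t * V = - (\<bar>W\<bar> + \<bar>\<gamma>\<bar> + 1)" using V by (simp add: t_def V_def)
      finally have "(\<Sum>i<m. c i * u i) < \<gamma>" by linarith
      thus False using Dlow[OF uD u0] by simp
    qed
  qed
  show ?thesis using le1 le2 by (rule antisym)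
qed

end
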